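(* For every theory $\Sigma$ and every formula $A \Rightarrow B$: $\Sigma \vdash A \Rightarrow B$ if and only if $\Sigma \models A \Rightarrow B$.
   Context: $Y$ is a non-empty finite set of attributes and $\mathcal{T}_Y = \{y^i \mid y \in Y, i \in \mathbb{Z}\}$; $M + j = \{y^{i+j} \mid y^i \in M\}$. A formula is $A \Rightarrow B$ with $A,B$ finite subsets of $\mathcal{T}_Y$; $M \models A \Rightarrow B$ means that for every $i \in \mathbb{Z}$, $A+i \subseteq M$ implies $B+i \subseteq M$; $\Sigma \models A \Rightarrow B$ means $A \Rightarrow B$ is true in every $M \subseteq \mathcal{T}_Y$ in which all formulas of the theory $\Sigma$ are true. Deduction rules (for arbitrary finite $A,B,C,D \subseteq \mathcal{T}_Y$, $i \in \mathbb{Z}$): (Ax) infer $A \cup B \Rightarrow A$; (Cut) from $A \Rightarrow B$ and $B \cup C \Rightarrow D$ infer $A \cup C \Rightarrow D$; (Shf) from $A \Rightarrow B$ infer $A+i \Rightarrow B+i$. $\Sigma \vdash A \Rightarrow B$ means there is a finite sequence of formulas ending with $A \Rightarrow B$ in which each member is in $\Sigma$ or is the conclusion of one of these rules applied to earlier members. *)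

theory Defs
  imports Main
begin

text \<open>Temporal attributes y^i are represented as pairs (y, i) :: 'y \<times> int.
  A formula A \<Rightarrow> B is a pair (A, B) of finite sets of such attributes.\<close>

type_synonym 'y tattr = "'y \<times> int"
type_synonym 'y fml = "'y tattr set \<times> 'y tattr set"

definition shift :: "'y tattr set \<Rightarrow> int \<Rightarrow> 'y tattr set" where
  "shift M j = (\<lambda>(y, i). (y, i + j)) ` M"

definition is_fml :: "'y fml \<Rightarrow> bool" where
  "is_fml f \<longleftrightarrow> finite (fst f) \<and> finite (snd f)"

definition true_in :: "'y tattr set \<Rightarrow> 'y fml \<Rightarrow> bool" where
  "true_in M f \<longleftrightarrow> (\<forall>i::int. shift (fst f) i \<subseteq> M \<longrightarrow> shift (snd f) i \<subseteq> M)"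

definition sem_entails :: "'y fml set \<Rightarrow> 'y fml \<Rightarrow> bool" where
  "sem_entails \<Sigma> f \<longleftrightarrow> (\<forall>M. (\<forall>g\<in>\<Sigma>. true_in M g) \<longrightarrow> true_in M f)"

inductive provable :: "'y fml set \<Rightarrow> 'y fml \<Rightarrow> bool" for \<Sigma> where
  Hyp: "f \<in> \<Sigma> \<Longrightarrow> provable \<Sigma> f"
| Ax: "finite A \<Longrightarrow> finite B \<Longrightarrow> provable \<Sigma> (A \<union> B, A)"
| Cut: "finite C \<Longrightarrow> provable \<Sigma> (A, B) \<Longrightarrow> provable \<Sigma> (B \<union> C, D)
        \<Longrightarrow> provable \<Sigma> (A \<union> C, D)"
| Shf: "provable \<Sigma> (A, B) \<Longrightarrow> provable \<Sigma> (shift A i, shift B i)"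

end

theory Submission
  imports Defs
begin

lemma shift_shift: "shift (shift A i) j = shift A (i + j)"
  unfolding shift_def by (force simp: image_image add.assoc)

lemma shift_0: "shift A 0 = A"
  unfolding shift_def by auto

lemma shift_Un: "shift (A \<union> B) i = shift A i \<union> shift B i"
  unfolding shift_def by auto

lemma shift_mono: "A \<subseteq> B \<Longrightarrow> shift A i \<subseteq> shift B i"
  unfolding shift_def by auto

lemma shift_finite: "finite A \<Longrightarrow> finite (shift A i)"
  unfolding shift_def by auto

lemma sound: "provable \<Sigma> f \<Longrightarrow> (\<forall>g\<in>\<Sigma>. true_in M g) \<Longrightarrow> true_in M f"
proof (induction rule: provable.induct)
  case (Hyp f) then show ?case by auto
next
  case (Ax A B) then show ?case by (auto simp: true_in_def shift_Un)
next
  case (Cut C A B D)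
  then show ?case unfolding true_in_def by (simp add: shift_Un)
next
  case (Shf A B i)
  then show ?case unfolding true_in_def by (simp add: shift_shift)
qed

lemma proj:
  assumes "provable \<Sigma> (A, D)" "d \<in> D" "finite D"
  shows "provable \<Sigma> (A, {d})"
proof -
  have "provable \<Sigma> ({d} \<union> D, {d})" using assms by (intro provable.Ax) auto
  hence "provable \<Sigma> (D \<union> {}, {d})" using assms(2) by (simp add: insert_absorb)
  from provable.Cut[OF _ assms(1) this] show ?thesis by simp
qed

lemma union:
  assumes "provable \<Sigma> (A, B1)" "provable \<Sigma> (A, B2)" "finite A" "finite B1" "finite B2"
  shows "provable \<Sigma> (A, B1 \<union> B2)"
proof -
  have "provable \<Sigma> ((B2 \<union> B1) \<union> {}, B2 \<union> B1)" using assms by (intro provable.Ax) auto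
  hence "provable \<Sigma> (B2 \<union> B1, B2 \<union> B1)" by simp
  from provable.Cut[OF assms(4) assms(2) this]
  have "provable \<Sigma> (A \<union> B1, B2 \<union> B1)" .
  hence "provable \<Sigma> (B1 \<union> A, B1 \<union> B2)" by (simp add: Un_commute)
  from provable.Cut[OF assms(3) assms(1) this] show ?thesis by simp
qed

lemma collect:
  assumes "finite B" "finite A" "\<forall>b\<in>B. provable \<Sigma> (A, {b})"
  shows "provable \<Sigma> (A, B)"
  using assms
proof (induction B rule: finite_induct)
  case empty
  have "provable \<Sigma> ({} \<union> A, {})" using empty by (intro provable.Ax) auto
  then show ?case by simp
next
  case (insert b B)
  then have "provable \<Sigma> (A, {b} \<union> B)" by (intro union) auto
  then show ?case by simp
qed

theorem theorem7:
  fixes \<Sigma> :: "'y fml set" and A B :: "'y tattr set"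
  assumes "finite (UNIV :: 'y set)"
    and "\<forall>f\<in>\<Sigma>. is_fml f"
    and "finite A" and "finite B"
  shows "provable \<Sigma> (A, B) \<longleftrightarrow> sem_entails \<Sigma> (A, B)"
proof
  assume "provable \<Sigma> (A, B)"
  then show "sem_entails \<Sigma> (A, B)" unfolding sem_entails_def using sound by blast
next
  assume S: "sem_entails \<Sigma> (A, B)"
  define M where "M = {t. provable \<Sigma> (A, {t})}"
  have AM: "A \<subseteq> M"
  proof
    fix a assume "a \<in> A"
    have "provable \<Sigma> ({a} \<union> A, {a})" using assms by (intro provable.Ax) auto
    with \<open>a \<in> A\<close> show "a \<in> M" unfolding M_def by (simp add: insert_absorb)
  qed
  have "\<forall>g\<in>\<Sigma>. true_in M g"
  proof
    fix g assume g: "g \<in> \<Sigma>"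
    obtain C D where gCD: "g = (C, D)" by (cases g)
    have fin: "finite C" "finite D" using assms(2) g gCD by (auto simp: is_fml_def)
    show "true_in M g" unfolding true_in_def gCD fst_conv snd_conv
    proof (intro allI impI)
      fix i assume "shift C i \<subseteq> M"
      hence p1: "provable \<Sigma> (A, shift C i)"
        using fin assms(3) by (intro collect) (auto simp: M_def shift_finite)
      have "provable \<Sigma> (shift C i, shift D i)"
        using provable.Shf[OF provable.Hyp[OF g[unfolded gCD]]] .
      hence p2: "provable \<Sigma> (shift C i \<union> {}, shift D i)" by simp
      have "provable \<Sigma> (A \<union> {}, shift D i)"
        using provable.Cut[OF _ p1 p2] by simp
      hence "provable \<Sigma> (A, shift D i)" by simp
      then show "shift D i \<subseteq> M" unfolding M_def
        using proj fin shift_finite by blast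
    qed
  qed
  with S have "true_in M (A, B)" unfolding sem_entails_def by blast
  hence "shift A 0 \<subseteq> M \<longrightarrow> shift B 0 \<subseteq> M" unfolding true_in_def by simp
  with AM have "shift B 0 \<subseteq> M" by (simp add: shift_0)
  hence "B \<subseteq> M" by (simp add: shift_0)
  then show "provable \<Sigma> (A, B)" using assms(3,4) by (intro collect) (auto simp: M_def)
qed

end
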